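(* For every 3-periodic of the elliptic billiard, the product of the cosines of the three interior angles $\theta_1',\theta_2',\theta_3'$ of its outer triangle satisfies $$\prod_{i=1}^3\cos\theta_i'=\frac{JL}{4}-1,$$ where $J$ and $L$ are the (family-invariant) Joachimsthal constant and perimeter; in particular this product is the same for all 3-periodics.
   Context: The elliptic billiard is $\mathcal{E}: x^2/a^2+y^2/b^2=1$, $a>b>0$, $c=\sqrt{a^2-b^2}$. A 3-periodic is a triangle $P_1P_2P_3$ inscribed in $\mathcal{E}$ that is a closed billiard trajectory (at each vertex the normal to $\mathcal{E}$ bisects the angle between the two incident sides); all 3-periodics are tangent to a common confocal elliptic caustic. The outer triangle has as sides the tangent lines to $\mathcal{E}$ at $P_1,P_2,P_3$. The perimeter $L$ is the same for all 3-periodics. Joachimsthal's constant is $J=\frac12\nabla f(P_i)\cdot\hat v$, where $f(x,y)=x^2/a^2+y^2/b^2$, $\nabla f=2(x/a^2,y/b^2)$, and $\hat v$ is the unit direction of the trajectory at $P_i$ (outgoing, oriented so that $J>0$); it is the same at every vertex and for every 3-periodic. Explicitly, with $\delta=\sqrt{a^4-a^2b^2+b^4}$: $J=\sqrt{2\delta-a^2-b^2}/c^2$ and $L=2(\delta+a^2+b^2)J$. Moreover $\sum_{i=1}^3\cos\theta_i=JL-3$ for the interior angles $\theta_i$ of the 3-periodic. *)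

theory Defs
  imports "HOL-Analysis.Analysis"
begin

definition on_ellipse :: "real \<Rightarrow> real \<Rightarrow> real \<times> real \<Rightarrow> bool" where
  "on_ellipse a b P \<longleftrightarrow> (fst P)^2 / a^2 + (snd P)^2 / b^2 = 1"

text \<open>Half the gradient of f(x,y) = x^2/a^2 + y^2/b^2: the outward normal of the ellipse.\<close>
definition ell_normal :: "real \<Rightarrow> real \<Rightarrow> real \<times> real \<Rightarrow> real \<times> real" where
  "ell_normal a b P = (fst P / a^2, snd P / b^2)"

text \<open>Reflection law at vertex P with neighbouring vertices A and B: the normal
  to the ellipse at P makes equal angles with the two sides PA and PB
  (i.e. it bisects the angle APB).\<close>
definition billiard_bounce :: "real \<Rightarrow> real \<Rightarrow> real \<times> real \<Rightarrow> real \<times> real \<Rightarrow> real \<times> real \<Rightarrow> bool" where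
  "billiard_bounce a b A P B \<longleftrightarrow>
     inner ((A - P) /\<^sub>R norm (A - P)) (ell_normal a b P)
       = inner ((B - P) /\<^sub>R norm (B - P)) (ell_normal a b P)"

definition three_periodic :: "real \<Rightarrow> real \<Rightarrow> real \<times> real \<Rightarrow> real \<times> real \<Rightarrow> real \<times> real \<Rightarrow> bool" where
  "three_periodic a b P1 P2 P3 \<longleftrightarrow>
     on_ellipse a b P1 \<and> on_ellipse a b P2 \<and> on_ellipse a b P3 \<and>
     P1 \<noteq> P2 \<and> P2 \<noteq> P3 \<and> P3 \<noteq> P1 \<and>
     billiard_bounce a b P3 P1 P2 \<and> billiard_bounce a b P1 P2 P3 \<and> billiard_bounce a b P2 P3 P1"

definition tangent_line :: "real \<Rightarrow> real \<Rightarrow> real \<times> real \<Rightarrow> (real \<times> real) set" where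
  "tangent_line a b P = {X. fst X * fst P / a^2 + snd X * snd P / b^2 = 1}"

definition outer_vertex :: "real \<Rightarrow> real \<Rightarrow> real \<times> real \<Rightarrow> real \<times> real \<Rightarrow> real \<times> real" where
  "outer_vertex a b P Q = (THE X. X \<in> tangent_line a b P \<and> X \<in> tangent_line a b Q)"

definition vec_angle :: "real \<times> real \<Rightarrow> real \<times> real \<Rightarrow> real" where
  "vec_angle u v = arccos (inner u v / (norm u * norm v))"

text \<open>Interior angle of the outer triangle at the vertex where the tangents at P and Q
  meet; the sides through that vertex contain the tangency points P and Q.\<close>
definition outer_angle :: "real \<Rightarrow> real \<Rightarrow> real \<times> real \<Rightarrow> real \<times> real \<Rightarrow> real" where
  "outer_angle a b P Q = (let X = outer_vertex a b P Q in vec_angle (P - X) (Q - X))"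

definition delta_ell :: "real \<Rightarrow> real \<Rightarrow> real" where
  "delta_ell a b = sqrt (a^4 - a^2 * b^2 + b^4)"

definition joachimsthal3 :: "real \<Rightarrow> real \<Rightarrow> real" where
  "joachimsthal3 a b = sqrt (2 * delta_ell a b - a^2 - b^2) / (a^2 - b^2)"

definition perimeter3 :: "real \<Rightarrow> real \<Rightarrow> real" where
  "perimeter3 a b = 2 * (delta_ell a b + a^2 + b^2) * joachimsthal3 a b"

end

theory Submission
  imports Defs
begin


lemma Fij:
  assumes "X^2+Y^2=1" "X'^2+Y'^2=1"
  shows "(Complex X Y)^2 + (Complex X' Y')^2 - complex_of_real k*(Complex X Y)^2*(Complex X' Y')^2
     - complex_of_real k - 2*(1 - complex_of_real k*complex_of_real r)*Complex X Y*Complex X' Y'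
   = 2*Complex X Y*Complex X' Y'*complex_of_real(X*X'+Y*Y' - k*(X*X'-Y*Y') - (1-k*r))"
  apply (simp add: complex_eq_iff power2_eq_square)
  apply (rule conjI)
  using assms by algebra+

lemma sq_diff:
  assumes "X^2+Y^2=1" "X'^2+Y'^2=1"
  shows "(Complex X Y - Complex X' Y')^2 = 2*Complex X Y*Complex X' Y'*complex_of_real(X*X'+Y*Y'-1)"
  apply (simp add: complex_eq_iff power2_eq_square)
  apply (rule conjI)
  using assms by algebra+

lemma q_id:
  assumes "X^2+Y^2=1"
  shows "((Complex X Y)^2)^2 - 2*complex_of_real r*(Complex X Y)^2 + 1
     = -2*(Complex X Y)^2*complex_of_real(r - (X*X - Y*Y))"
  apply (simp add: complex_eq_iff power2_eq_square)
  apply (rule conjI)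
  subgoal using assms by algebra
  subgoal by (simp add: algebra_simps)
  done

lemma D_ne:
  assumes "X^2+Y^2=1" "k > 0" "1 - complex_of_real k*(Complex X Y)^2 = 0"
  shows "k = 1 \<and> Y = 0"
proof -
  have re: "1 - k*(X*X - Y*Y) = 0" and im: "k*(2*X*Y) = 0"
    using assms(3) by (simp_all add: complex_eq_iff power2_eq_square algebra_simps)
  then have "X*Y = 0" using assms(2) by simp
  then have "X = 0 \<or> Y = 0" by simp
  then show ?thesis
  proof
    assume "X = 0"
    then have "Y*Y = 1" using assms(1) by (simp add: power2_eq_square)
    then show ?thesis using re \<open>X = 0\<close> assms(2) by simp
  next
    assume "Y = 0"
    then have "X*X = 1" using assms(1) by (simp add: power2_eq_square)
    then show ?thesis using re \<open>Y = 0\<close> by simp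
  qed
qed

lemma anti:
  fixes x1 y1 x2 y2 x3 y3 k r :: real
  assumes u1: "x1^2+y1^2=1" and u2: "x2^2+y2^2=1" and u3: "x3^2+y3^2=1"
    and e12: "x1*x2+y1*y2 - k*(x1*x2-y1*y2) = 1-k*r"
    and e13: "x1*x3+y1*y3 - k*(x1*x3-y1*y3) = 1-k*r"
    and e23: "x2*x3+y2*y3 - k*(x2*x3-y2*y3) = 1-k*r"
    and k: "k > 0" and r: "r > 1"
  shows "1 + (x2*x3+y2*y3) \<noteq> 0"
proof
  assume h: "1 + (x2*x3+y2*y3) = 0"
  have "(x2+x3)^2 + (y2+y3)^2 = 0" using h u2 u3 by algebra
  then have "x2 + x3 = 0" "y2 + y3 = 0" by (simp_all add: sum_power2_eq_zero_iff)
  then have x3: "x3 = -x2" and y3: "y3 = -y2" by simp_all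
  have "1 - k*r = 0" using e12 e13 unfolding x3 y3 by (simp add: algebra_simps)
  then have kr: "k*r = 1" by simp
  have "- (x2^2 + y2^2) + k*(x2^2 - y2^2) = 1 - k*r" using e23 unfolding x3 y3 by (simp add: algebra_simps power2_eq_square)
  then have "k*(x2^2 - y2^2) = k*r" using u2 kr by simp
  then have "x2^2 - y2^2 = r" using k by simp
  moreover have "x2^2 - y2^2 \<le> 1" using u2 zero_le_power2[of y2] by linarith
  ultimately show False using r by simp
qed

lemma dist_C:
  fixes a b X Y X' Y' :: real
  assumes "X^2+Y^2=1" "X'^2+Y'^2=1" "(a*X, b*Y) \<noteq> (a*X', b*Y')"
  shows "1 - (X*X'+Y*Y') > 0"
proof -
  have "X \<noteq> X' \<or> Y \<noteq> Y'" using assms(3) by auto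
  then have "(X-X')^2 + (Y-Y')^2 > 0"
  proof
    assume "X \<noteq> X'" then have "(X-X')^2 > 0" by simp
    then show ?thesis by (simp add: add_pos_nonneg)
  next
    assume "Y \<noteq> Y'" then have "(Y-Y')^2 > 0" by simp
    then show ?thesis by (simp add: add_nonneg_pos)
  qed
  moreover have "(X-X')^2 + (Y-Y')^2 = 2*(1 - (X*X'+Y*Y'))" using assms(1,2) by algebra
  ultimately show ?thesis by simp
qed

lemma inner_divR: "inner (x /\<^sub>R c) y = inner x y / c" for x y :: "real \<times> real"
  by (simp add: inner_scaleR_left divide_inverse_commute)

lemma bounce_eq:
  assumes "a > 0" "b > 0" "X^2+Y^2=1"
    and "billiard_bounce a b (a*XA, b*YA) (a*X, b*Y) (a*XB, b*YB)"
  shows "(X*XA+Y*YA - 1) / norm ((a*XA, b*YA) - (a*X, b*Y)) = (X*XB+Y*YB - 1) / norm ((a*XB, b*YB) - (a*X, b*Y))"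
proof -
  have "inner ((a*XA, b*YA) - (a*X, b*Y)) (ell_normal a b (a*X, b*Y)) / norm ((a*XA, b*YA) - (a*X, b*Y))
      = inner ((a*XB, b*YB) - (a*X, b*Y)) (ell_normal a b (a*X, b*Y)) / norm ((a*XB, b*YB) - (a*X, b*Y))"
    using assms(4) unfolding billiard_bounce_def inner_divR .
  moreover have "inner ((a*XA, b*YA) - (a*X, b*Y)) (ell_normal a b (a*X, b*Y)) = X*XA+Y*YA - 1"
    and "inner ((a*XB, b*YB) - (a*X, b*Y)) (ell_normal a b (a*X, b*Y)) = X*XB+Y*YB - 1"
  proof -
    show "inner ((a*XA, b*YA) - (a*X, b*Y)) (ell_normal a b (a*X, b*Y)) = X*XA+Y*YA - 1"
      using assms(1,2,3) by (simp add: ell_normal_def field_simps power2_eq_square) algebra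
    show "inner ((a*XB, b*YB) - (a*X, b*Y)) (ell_normal a b (a*X, b*Y)) = X*XB+Y*YB - 1"
      using assms(1,2,3) by (simp add: ell_normal_def field_simps power2_eq_square) algebra
  qed
  ultimately show ?thesis by simp
qed

lemma pair_E:
  fixes a b X Y X' Y' g :: real
  assumes u: "X^2+Y^2=1" and u': "X'^2+Y'^2=1" and ne: "(a*X, b*Y) \<noteq> (a*X', b*Y')"
    and g: "(1 - (X*X'+Y*Y')) / norm ((a*X', b*Y') - (a*X, b*Y)) = g"
  shows "(X*X'+Y*Y') - g^2*(a^2-b^2)*(X*X'-Y*Y') = 1 - g^2*(a^2+b^2)"
proof -
  define C where "C = X*X'+Y*Y'"
  define l where "l = norm ((a*X', b*Y') - (a*X, b*Y))"
  have C1: "1 - C > 0" unfolding C_def using dist_C[OF u u' ne] .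
  have l0: "l \<noteq> 0" unfolding l_def using ne by (metis norm_eq_zero right_minus_eq)
  have ll: "l^2 = (1 - C)*((a^2+b^2) - (a^2-b^2)*(X*X'-Y*Y'))"
  proof -
    have "l^2 = (a*X'-a*X)^2 + (b*Y'-b*Y)^2" unfolding l_def by (simp add: norm_Pair)
    also have "\<dots> = (1 - C)*((a^2+b^2) - (a^2-b^2)*(X*X'-Y*Y'))" unfolding C_def using u u' by algebra
    finally show ?thesis .
  qed
  have "1 - C = g*l" using g l0 unfolding C_def l_def by (simp add: field_simps)
  then have "(1-C)^2 = g^2*l^2" by (simp add: power_mult_distrib)
  then have "(1-C)*(1-C) = (1-C)*(g^2*((a^2+b^2) - (a^2-b^2)*(X*X'-Y*Y')))" unfolding ll by (simp add: power2_eq_square algebra_simps)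
  then have "1 - C = g^2*((a^2+b^2) - (a^2-b^2)*(X*X'-Y*Y'))" using C1 by simp
  then show ?thesis unfolding C_def by (simp add: algebra_simps)
qed

lemma JL:
  assumes ab: "a > b" "b > 0" and k: "k > 0" and G: "2*k*r = 3 - k^2" and r: "r*(a^2-b^2) = a^2+b^2"
  shows "joachimsthal3 a b * perimeter3 a b / 4 - 1 = (k*r - 1)/4"
proof -
  define c where "c = a^2 - b^2"
  have c: "c > 0" unfolding c_def using ab by (simp add: power_strict_mono)
  have rpos: "r > 0" using r c ab unfolding c_def by (metis add_pos_pos zero_less_mult_pos2 zero_less_power2 less_irrefl order.strict_trans)
  have "(c*(k+r)/2)^2 = a^4 - a^2*b^2 + b^4"
  proof -
    have "(c*(k+r)/2)^2 = c^2*(k^2 + 2*k*r + r^2)/4" by (simp add: power2_eq_square algebra_simps)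
    also have "\<dots> = (3*c^2 + (r*c)^2)/4" using G by (simp add: power2_eq_square algebra_simps)
    also have "\<dots> = (3*c^2 + (a^2+b^2)^2)/4" using r unfolding c_def by (simp add: mult.commute)
    also have "3*c^2 + (a^2+b^2)^2 = 4*(a^4 - a^2*b^2 + b^4)" unfolding c_def by algebra
    finally show ?thesis by simp
  qed
  moreover have "c*(k+r)/2 \<ge> 0" using c k rpos by simp
  ultimately have del: "delta_ell a b = c*(k+r)/2" unfolding delta_ell_def by (metis real_sqrt_unique)
  have j: "joachimsthal3 a b = sqrt (c*k) / c"
  proof -
    have rc: "r*c = a^2+b^2" using r unfolding c_def .
    have "2 * delta_ell a b - a^2 - b^2 = c*k + (r*c - (a^2+b^2))" unfolding del by (simp add: algebra_simps)
    then have "2 * delta_ell a b - a^2 - b^2 = c*k" using rc by simp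
    then show ?thesis unfolding joachimsthal3_def c_def by simp
  qed
  have jj: "joachimsthal3 a b ^2 = k / c" unfolding j using c k by (simp add: power_divide power2_eq_square)
  have "joachimsthal3 a b * perimeter3 a b / 4 - 1 = (delta_ell a b + a^2+b^2) * joachimsthal3 a b ^2 / 2 - 1"
    unfolding perimeter3_def by (simp add: power2_eq_square algebra_simps)
  also have "\<dots> = (c*(k+r)/2 + r*c) * (k/c) / 2 - 1" unfolding del jj using r unfolding c_def by (simp add: algebra_simps)
  also have "\<dots> = (k^2 + 3*k*r - 4)/4" using c by (simp add: field_simps power2_eq_square)
  also have "\<dots> = (k*r - 1)/4"
  proof -
    have "k^2 + 3*k*r - 4 = k*r - 1" using G unfolding power2_eq_square by linarith
    then show ?thesis by simp
  qed
  finally show ?thesis .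
qed

lemma sym_q: fixes q1 q2 q3 r :: complex
  shows "(q1^2-2*r*q1+1)*(q2^2-2*r*q2+1)*(q3^2-2*r*q3+1) =
   (q1*q2*q3)^2 + (q1*q2+q2*q3+q3*q1)^2 + (q1+q2+q3)^2 + 1
   - (q1*q2*q3)*(q1*q2+q2*q3+q3*q1)*(2*r) - (q1*q2+q2*q3+q3*q1)*(q1+q2+q3)*(2*r) - (q1+q2+q3)*(2*r)
   + (q1*q2*q3)*(q1+q2+q3)*(4*r^2-2) + (q1*q2+q2*q3+q3*q1)*(4*r^2-2) - (q1*q2*q3)*(8*r^3-6*r)"
  by algebra
lemma disc: fixes z1 z2 z3 :: complex
  shows "((z1-z2)*(z1-z3)*(z2-z3))^2 = (z1+z2+z3)^2*(z1*z2+z2*z3+z3*z1)^2 - 4*(z1*z2+z2*z3+z3*z1)^3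
     - 4*(z1+z2+z3)^3*(z1*z2*z3) + 18*(z1+z2+z3)*(z1*z2+z2*z3+z3*z1)*(z1*z2*z3) - 27*(z1*z2*z3)^2"
  by algebra
lemma fin: fixes k W r :: complex assumes "2*k*r = 3 - k^2" "k\<noteq>0"
  shows "4*(k*r-1)^2*((-k*W)^2*(-k)^2 - 4*(-k)^3 - 4*(-k*W)^3*W + 18*(-k*W)*(-k)*W - 27*W^2)
    = k^3*((W^2)^2 + ((-k)^2 - 2*(-k*W)*W)^2 + ((-k*W)^2-2*(-k))^2 + 1
   - (W^2)*((-k)^2 - 2*(-k*W)*W)*(2*r) - ((-k)^2 - 2*(-k*W)*W)*((-k*W)^2-2*(-k))*(2*r) - ((-k*W)^2-2*(-k))*(2*r)
   + (W^2)*((-k*W)^2-2*(-k))*(4*r^2-2) + ((-k)^2 - 2*(-k*W)*W)*(4*r^2-2) - (W^2)*(8*r^3-6*r))"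
proof -
  have r: "r = (3-k^2)/(2*k)" using assms by (simp add: field_simps)
  show ?thesis unfolding r using assms(2) by (simp add: field_simps) algebra
qed

lemma core:
  fixes Z1 Z2 Z3 k r :: complex
  assumes F12: "Z1^2+Z2^2 - k*Z1^2*Z2^2 - k - 2*(1-k*r)*Z1*Z2 = 0"
    and F13: "Z1^2+Z3^2 - k*Z1^2*Z3^2 - k - 2*(1-k*r)*Z1*Z3 = 0"
    and F23: "Z2^2+Z3^2 - k*Z2^2*Z3^2 - k - 2*(1-k*r)*Z2*Z3 = 0"
    and ne: "Z2 \<noteq> Z3" and k: "k \<noteq> 0" and D: "1 - k*Z1^2 \<noteq> 0"
    and Q: "Z1^4 - 2*r*Z1^2 + 1 \<noteq> 0"
  shows "2*k*r = 3 - k^2 \<and> 4*(k*r-1)^2*((Z1-Z2)*(Z1-Z3)*(Z2-Z3))^2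
     = k^3*(((Z1^2)^2-2*r*Z1^2+1)*((Z2^2)^2-2*r*Z2^2+1)*((Z3^2)^2-2*r*Z3^2+1))"
proof -
  define D where "D = 1 - k*Z1^2"
  define m where "m = 1 - k*r"
  have "(Z2-Z3)*(D*(Z2+Z3) - 2*m*Z1) = 0"
  proof -
    have "(Z2-Z3)*(D*(Z2+Z3) - 2*m*Z1) = (Z1^2+Z2^2 - k*Z1^2*Z2^2 - k - 2*(1-k*r)*Z1*Z2) - (Z1^2+Z3^2 - k*Z1^2*Z3^2 - k - 2*(1-k*r)*Z1*Z3)"
      unfolding D_def m_def by algebra
    then show ?thesis by (simp only: F12 F13 diff_self)
  qed
  then have vs: "D*(Z2+Z3) = 2*m*Z1" using ne by simp
  have vp: "D*(Z2*Z3) = Z1^2 - k"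
  proof -
    have "Z1^2+Z2^2 - k*Z1^2*Z2^2 - k - 2*(1-k*r)*Z1*Z2 = D*Z2^2 - (2*m*Z1)*Z2 + Z1^2 - k"
      unfolding D_def m_def by algebra
    also have "\<dots> = D*Z2^2 - (D*(Z2+Z3))*Z2 + Z1^2 - k" using vs by simp
    also have "\<dots> = Z1^2 - k - D*(Z2*Z3)" by algebra
    finally have h: "Z1^2+Z2^2 - k*Z1^2*Z2^2 - k - 2*(1-k*r)*Z1*Z2 = Z1^2 - k - D*(Z2*Z3)" .
    have "Z1^2 - k - D*(Z2*Z3) = 0" by (simp only: h[symmetric] F12)
    then show ?thesis by simp
  qed
  have "D^2*(Z2^2+Z3^2 - k*Z2^2*Z3^2 - k - 2*(1-k*r)*Z2*Z3)
     = (D*(Z2+Z3))^2 - 2*D*(D*(Z2*Z3)) - k*(D*(Z2*Z3))^2 - k*D^2 - 2*m*D*(D*(Z2*Z3))"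
    unfolding m_def by algebra
  also have "\<dots> = (2*m*Z1)^2 - 2*D*(Z1^2-k) - k*(Z1^2-k)^2 - k*D^2 - 2*m*D*(Z1^2-k)"
    using vs vp by simp
  also have "\<dots> = k*(3-k^2-2*k*r)*(Z1^4 - 2*r*Z1^2 + 1)"
    unfolding D_def m_def by algebra
  finally have "k*(3-k^2-2*k*r)*(Z1^4 - 2*r*Z1^2 + 1) = 0" using F23 by simp
  then have G: "2*k*r = 3 - k^2" using k Q by simp
  have Dn: "D \<noteq> 0" using D unfolding D_def .
  have "D*(Z1*Z2+Z2*Z3+Z3*Z1 + k) = Z1*(D*(Z2+Z3)) + D*(Z2*Z3) + k*D" by algebra
  also have "\<dots> = Z1^2*(2*m+1-k^2)" unfolding vs vp unfolding D_def by algebra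
  also have "\<dots> = 0" unfolding m_def using G by (simp add: algebra_simps)
  finally have e2: "Z1*Z2+Z2*Z3+Z3*Z1 = -k" using Dn by (simp add: add_eq_0_iff)
  have "D*(Z1+Z2+Z3 + k*(Z1*Z2*Z3)) = D*Z1 + D*(Z2+Z3) + k*Z1*(D*(Z2*Z3))" by algebra
  also have "\<dots> = Z1*(2*m+1-k^2)" unfolding vs vp unfolding D_def by algebra
  also have "\<dots> = 0" unfolding m_def using G by (simp add: algebra_simps)
  finally have e1: "Z1+Z2+Z3 = -k*(Z1*Z2*Z3)" using Dn by (simp add: add_eq_0_iff)
  define W where "W = Z1*Z2*Z3"
  have E1: "Z1^2+Z2^2+Z3^2 = (Z1+Z2+Z3)^2 - 2*(Z1*Z2+Z2*Z3+Z3*Z1)" by algebra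
  have E2: "Z1^2*Z2^2+Z2^2*Z3^2+Z3^2*Z1^2 = (Z1*Z2+Z2*Z3+Z3*Z1)^2 - 2*(Z1+Z2+Z3)*(Z1*Z2*Z3)" by algebra
  have E3: "Z1^2*Z2^2*Z3^2 = (Z1*Z2*Z3)^2" by algebra
  have S: "((Z1^2)^2-2*r*Z1^2+1)*((Z2^2)^2-2*r*Z2^2+1)*((Z3^2)^2-2*r*Z3^2+1) = 
   (W^2)^2 + ((-k)^2 - 2*(-k*W)*W)^2 + ((-k*W)^2-2*(-k))^2 + 1
   - (W^2)*((-k)^2 - 2*(-k*W)*W)*(2*r) - ((-k)^2 - 2*(-k*W)*W)*((-k*W)^2-2*(-k))*(2*r) - ((-k*W)^2-2*(-k))*(2*r)
   + (W^2)*((-k*W)^2-2*(-k))*(4*r^2-2) + ((-k)^2 - 2*(-k*W)*W)*(4*r^2-2) - (W^2)*(8*r^3-6*r)"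
    unfolding sym_q E1 E2 E3 e1 e2 W_def[symmetric] by (rule refl)
  have Dd: "((Z1-Z2)*(Z1-Z3)*(Z2-Z3))^2 = (-k*W)^2*(-k)^2 - 4*(-k)^3 - 4*(-k*W)^3*W + 18*(-k*W)*(-k)*W - 27*W^2"
    unfolding disc e1 e2 W_def[symmetric] by (rule refl)
  show ?thesis using G fin[OF G k] unfolding S Dd by simp
qed


lemma ell_param:
  assumes "on_ellipse a b P" "a > 0" "b > 0"
  obtains X Y where "P = (a*X, b*Y)" "X^2 + Y^2 = 1"
proof -
  have "P = (a*(fst P/a), b*(snd P/b))" using assms by simp
  moreover have "(fst P/a)^2 + (snd P/b)^2 = 1" using assms(1) unfolding on_ellipse_def by (simp add: power_divide)
  ultimately show ?thesis using that by blast
qed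

lemma inner_normal:
  assumes "a > 0" "b > 0" "X^2 + Y^2 = 1"
  shows "inner ((a*X', b*Y') - (a*X, b*Y)) (ell_normal a b (a*X, b*Y)) = X*X' + Y*Y' - 1"
proof -
  have "inner ((a*X', b*Y') - (a*X, b*Y)) (ell_normal a b (a*X, b*Y)) = (a*X'-a*X)*(a*X/a^2) + (b*Y'-b*Y)*(b*Y/b^2)"
    by (simp add: ell_normal_def)
  also have "\<dots> = (X'-X)*X + (Y'-Y)*Y" using assms(1,2) by (simp add: field_simps power2_eq_square)
  also have "\<dots> = X*X' + Y*Y' - 1" using assms(3) by (simp add: algebra_simps power2_eq_square)
  finally show ?thesis .
qed

lemma norm_sq:
  assumes "X^2 + Y^2 = 1" "X'^2 + Y'^2 = 1"
  shows "(norm ((a*X', b*Y') - (a*X, b*Y)))^2 = (1 - (X*X'+Y*Y'))*((a^2+b^2) - (a^2-b^2)*(X*X'-Y*Y'))"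
proof -
  have "(norm ((a*X', b*Y') - (a*X, b*Y)))^2 = (a*X'-a*X)^2 + (b*Y'-b*Y)^2"
    by (simp add: norm_Pair)
  also have "\<dots> = (1 - (X*X'+Y*Y'))*((a^2+b^2) - (a^2-b^2)*(X*X'-Y*Y'))"
    using assms by algebra
  finally show ?thesis .
qed

lemma aux_div: "(a::real) \<noteq> 0 \<Longrightarrow> a*t1/t2*(a*t3)/a^2 = t1/t2*t3"
  by (simp add: power2_eq_square)

lemma outer_cos:
  assumes a: "a > 0" and b: "b > 0" and u1: "X^2 + Y^2 = 1" and u2: "X'^2 + Y'^2 = 1"
    and c1: "1 - (X*X'+Y*Y') \<noteq> 0" and c2: "1 + (X*X'+Y*Y') \<noteq> 0"
  shows "cos (outer_angle a b (a*X, b*Y) (a*X', b*Y')) =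
     - (b^2*X*X' + a^2*Y*Y') / (sqrt (b^2*X^2 + a^2*Y^2) * sqrt (b^2*X'^2 + a^2*Y'^2))"
proof -
  define C where "C = X*X'+Y*Y'"
  define S where "S = X*Y' - X'*Y"
  have CS: "C^2 + S^2 = 1" unfolding C_def S_def using u1 u2 by algebra
  have S0: "S \<noteq> 0"
  proof
    assume "S = 0"
    then have "(1-C)*(1+C) = 0" using CS by (simp add: algebra_simps power2_eq_square)
    then show False using c1 c2 unfolding C_def by simp
  qed
  have C1: "1 + C \<noteq> 0" using c2 unfolding C_def .
  define V where "V = (a*(X+X')/(1+C), b*(Y+Y')/(1+C))"
  have an: "a \<noteq> 0" and bn: "b \<noteq> 0" using a b by auto
  have pol1: "(X+X')*X + (Y+Y')*Y = 1 + C" unfolding C_def using u1 by (simp add: algebra_simps power2_eq_square)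
  have pol2: "(X+X')*X' + (Y+Y')*Y' = 1 + C" unfolding C_def using u2 by (simp add: algebra_simps power2_eq_square)
  have h1: "(X+X')/(1+C)*X + (Y+Y')/(1+C)*Y = 1"
  proof -
    have "(X+X')/(1+C)*X + (Y+Y')/(1+C)*Y = ((X+X')*X + (Y+Y')*Y)/(1+C)" by (simp add: add_divide_distrib distrib_right)
    then show ?thesis using pol1 C1 by simp
  qed
  have h2: "(X+X')/(1+C)*X' + (Y+Y')/(1+C)*Y' = 1"
  proof -
    have "(X+X')/(1+C)*X' + (Y+Y')/(1+C)*Y' = ((X+X')*X' + (Y+Y')*Y')/(1+C)" by (simp add: add_divide_distrib distrib_right)
    then show ?thesis using pol2 C1 by simp
  qed
  have onV: "V \<in> tangent_line a b (a*X,b*Y) \<and> V \<in> tangent_line a b (a*X',b*Y')"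
  proof -
    have "a*(X+X')/(1+C)*(a*X)/a^2 + b*(Y+Y')/(1+C)*(b*Y)/b^2 = ((X+X')*X + (Y+Y')*Y)/(1+C)"
      using a b by (simp only: aux_div[OF an] aux_div[OF bn]) (simp add: add_divide_distrib distrib_right)
    also have "\<dots> = 1" using C1 u1 unfolding C_def by (simp add: field_simps power2_eq_square)
    finally have 1: "a*(X+X')/(1+C)*(a*X)/a^2 + b*(Y+Y')/(1+C)*(b*Y)/b^2 = 1" .
    have "a*(X+X')/(1+C)*(a*X')/a^2 + b*(Y+Y')/(1+C)*(b*Y')/b^2 = ((X+X')*X' + (Y+Y')*Y')/(1+C)"
      using a b by (simp only: aux_div[OF an] aux_div[OF bn]) (simp add: add_divide_distrib distrib_right)
    also have "\<dots> = 1" using C1 u2 unfolding C_def by (simp add: field_simps power2_eq_square)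
    finally have 2: "a*(X+X')/(1+C)*(a*X')/a^2 + b*(Y+Y')/(1+C)*(b*Y')/b^2 = 1" .
    show ?thesis using 1 2 unfolding V_def tangent_line_def by simp
  qed
  have uniq: "W = V" if W: "W \<in> tangent_line a b (a*X,b*Y) \<and> W \<in> tangent_line a b (a*X',b*Y')" for W
  proof -
    define p where "p = fst W / a - (X+X')/(1+C)"
    define q where "q = snd W / b - (Y+Y')/(1+C)"
    have e1: "p*X + q*Y = 0"
    proof -
      have "fst W * (a*X)/a^2 + snd W*(b*Y)/b^2 = 1" using W unfolding tangent_line_def by simp
      moreover have "fst W * (a*X)/a^2 + snd W*(b*Y)/b^2 = (fst W/a)*X + (snd W/b)*Y"
        using a b by (simp add: field_simps power2_eq_square)
      moreover note h1
      ultimately show ?thesis unfolding p_def q_def by (simp add: algebra_simps)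
    qed
    have e2: "p*X' + q*Y' = 0"
    proof -
      have "fst W * (a*X')/a^2 + snd W*(b*Y')/b^2 = 1" using W unfolding tangent_line_def by simp
      moreover have "fst W * (a*X')/a^2 + snd W*(b*Y')/b^2 = (fst W/a)*X' + (snd W/b)*Y'"
        using a b by (simp add: field_simps power2_eq_square)
      moreover note h2
      ultimately show ?thesis unfolding p_def q_def by (simp add: algebra_simps)
    qed
    have "p*S = 0" unfolding S_def using e1 e2 by algebra
    then have p0: "p = 0" using S0 by simp
    have "q*S = 0" unfolding S_def using e1 e2 by algebra
    then have q0: "q = 0" using S0 by simp
    show ?thesis using p0 q0 a b unfolding p_def q_def V_def
      by (simp add: prod_eq_iff field_simps)
  qed
  have OV: "outer_vertex a b (a*X,b*Y) (a*X',b*Y') = V"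
    unfolding outer_vertex_def using onV uniq by (rule the_equality)
  define l where "l = S/(1+C)"
  have l0: "l \<noteq> 0" unfolding l_def using S0 C1 by simp
  have px: "X*(1+C) - (X+X') = S*Y" unfolding S_def C_def using u1 by algebra
  have py: "Y*(1+C) - (Y+Y') = - (S*X)" unfolding S_def C_def using u1 by algebra
  have fx: "X - (X+X')/(1+C) = l*Y"
  proof -
    have "X - (X+X')/(1+C) = (X*(1+C) - (X+X'))/(1+C)" using C1 by (simp add: diff_divide_distrib)
    then show ?thesis unfolding px l_def by simp
  qed
  have fy: "Y - (Y+Y')/(1+C) = - (l*X)"
  proof -
    have "Y - (Y+Y')/(1+C) = (Y*(1+C) - (Y+Y'))/(1+C)" using C1 by (simp add: diff_divide_distrib)
    then show ?thesis unfolding py l_def by simp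
  qed
  have U: "(a*X, b*Y) - V = (a*(l*Y), - (b*(l*X)))"
  proof -
    have "a*X - a*(X+X')/(1+C) = a*(X - (X+X')/(1+C))" by (simp add: right_diff_distrib)
    moreover have "b*Y - b*(Y+Y')/(1+C) = b*(Y - (Y+Y')/(1+C))" by (simp add: right_diff_distrib)
    ultimately show ?thesis unfolding V_def fx fy by simp
  qed
  have px': "X'*(1+C) - (X+X') = - (S*Y')" unfolding S_def C_def using u2 by algebra
  have py': "Y'*(1+C) - (Y+Y') = S*X'" unfolding S_def C_def using u2 by algebra
  have fx': "X' - (X+X')/(1+C) = - (l*Y')"
  proof -
    have "X' - (X+X')/(1+C) = (X'*(1+C) - (X+X'))/(1+C)" using C1 by (simp add: diff_divide_distrib)
    then show ?thesis unfolding px' l_def by simp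
  qed
  have fy': "Y' - (Y+Y')/(1+C) = l*X'"
  proof -
    have "Y' - (Y+Y')/(1+C) = (Y'*(1+C) - (Y+Y'))/(1+C)" using C1 by (simp add: diff_divide_distrib)
    then show ?thesis unfolding py' l_def by simp
  qed
  have U': "(a*X', b*Y') - V = (a*(- (l*Y')), b*(l*X'))"
  proof -
    have "a*X' - a*(X+X')/(1+C) = a*(X' - (X+X')/(1+C))" by (simp add: right_diff_distrib)
    moreover have "b*Y' - b*(Y+Y')/(1+C) = b*(Y' - (Y+Y')/(1+C))" by (simp add: right_diff_distrib)
    ultimately show ?thesis unfolding V_def fx' fy' by simp
  qed
  define T where "T = sqrt (b^2*X^2 + a^2*Y^2)"
  define T' where "T' = sqrt (b^2*X'^2 + a^2*Y'^2)"
  define N where "N = b^2*X*X' + a^2*Y*Y'"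
  have inn: "inner ((a*X, b*Y) - V) ((a*X', b*Y') - V) = - (l^2 * N)"
    unfolding U U' N_def by (simp add: power2_eq_square algebra_simps)
  have nu: "norm ((a*X, b*Y) - V) = \<bar>l\<bar> * T"
  proof -
    have "norm ((a*X, b*Y) - V) = sqrt (l^2 * (b^2*X^2 + a^2*Y^2))"
      unfolding U by (simp add: norm_Pair power2_eq_square algebra_simps)
    also have "\<dots> = \<bar>l\<bar> * T" unfolding T_def by (simp add: real_sqrt_mult)
    finally show ?thesis .
  qed
  have nv: "norm ((a*X', b*Y') - V) = \<bar>l\<bar> * T'"
  proof -
    have "norm ((a*X', b*Y') - V) = sqrt (l^2 * (b^2*X'^2 + a^2*Y'^2))"
      unfolding U' by (simp add: norm_Pair power2_eq_square algebra_simps)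
    also have "\<dots> = \<bar>l\<bar> * T'" unfolding T'_def by (simp add: real_sqrt_mult)
    finally show ?thesis .
  qed
  have bnd: "\<bar>inner u v / (norm u * norm v)\<bar> \<le> 1" for u v :: "real \<times> real"
  proof (cases "norm u * norm v = 0")
    case True
    then have "inner u v / (norm u * norm v) = 0" by (simp only: div_by_0)
    then show ?thesis by (simp only: abs_zero zero_le_one)
  next
    case False
    then have pos: "norm u * norm v > 0" by (simp add: less_le)
    have le: "\<bar>inner u v\<bar> \<le> norm u * norm v" by (rule Cauchy_Schwarz_ineq2)
    have "\<bar>inner u v / (norm u * norm v)\<bar> = \<bar>inner u v\<bar> / (norm u * norm v)"
      using pos by (simp add: abs_divide)
    also have "\<dots> \<le> 1" using le pos by (simp only: divide_le_eq_1_pos)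
    finally show ?thesis .
  qed
  have "cos (outer_angle a b (a*X, b*Y) (a*X', b*Y')) =
        inner ((a*X, b*Y) - V) ((a*X', b*Y') - V) / (norm ((a*X, b*Y) - V) * norm ((a*X', b*Y') - V))"
    unfolding outer_angle_def OV Let_def vec_angle_def by (rule cos_arccos_abs[OF bnd])
  also have "\<dots> = - (l^2*N) / (\<bar>l\<bar> * T * (\<bar>l\<bar> * T'))" unfolding inn nu nv ..
  also have "\<dots> = - N / (T*T')"
  proof -
    have "\<bar>l\<bar> * T * (\<bar>l\<bar> * T') = l^2 * (T*T')"
      by (metis abs_mult_self_eq mult.assoc mult.left_commute power2_eq_square)
    moreover have "l^2 \<noteq> 0" using l0 by simp
    ultimately show ?thesis by (metis minus_divide_left mult_divide_mult_cancel_left_if)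
  qed
  finally show ?thesis unfolding N_def T_def T'_def .
qed


lemma neg_frac: "((c::real) - 1)/l = (c' - 1)/l' \<Longrightarrow> (1 - c)/l = (1 - c')/l'"
  by (metis minus_diff_eq minus_divide_left)

theorem mainTheorem8:
  fixes a b :: real and P1 P2 P3 :: "real \<times> real"
  assumes "a > b" and "b > 0"
    and "three_periodic a b P1 P2 P3"
  shows "cos (outer_angle a b P2 P3) * cos (outer_angle a b P3 P1) * cos (outer_angle a b P1 P2)
           = joachimsthal3 a b * perimeter3 a b / 4 - 1"
proof -
  have a0: "a > 0" and b0: "b > 0" using assms by auto
  from assms(3) have on1: "on_ellipse a b P1" and on2: "on_ellipse a b P2" and on3: "on_ellipse a b P3"
    and n12: "P1 \<noteq> P2" and n23: "P2 \<noteq> P3" and n31: "P3 \<noteq> P1"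
    and bb1: "billiard_bounce a b P3 P1 P2" and bb2: "billiard_bounce a b P1 P2 P3"
    and bb3: "billiard_bounce a b P2 P3 P1"
    unfolding three_periodic_def by auto
  obtain X1 Y1 where P1e: "P1 = (a*X1, b*Y1)" and u1: "X1^2+Y1^2=1" using ell_param[OF on1 a0 b0] by blast
  obtain X2 Y2 where P2e: "P2 = (a*X2, b*Y2)" and u2: "X2^2+Y2^2=1" using ell_param[OF on2 a0 b0] by blast
  obtain X3 Y3 where P3e: "P3 = (a*X3, b*Y3)" and u3: "X3^2+Y3^2=1" using ell_param[OF on3 a0 b0] by blast
  have ne12: "(a*X1, b*Y1) \<noteq> (a*X2, b*Y2)" using n12 unfolding P1e P2e .
  have ne23: "(a*X2, b*Y2) \<noteq> (a*X3, b*Y3)" using n23 unfolding P2e P3e .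
  have ne13: "(a*X1, b*Y1) \<noteq> (a*X3, b*Y3)" using n31 unfolding P1e P3e by metis
  note B1 = bounce_eq[OF a0 b0 u1 bb1[unfolded P1e P2e P3e]]
  note B2 = bounce_eq[OF a0 b0 u2 bb2[unfolded P1e P2e P3e]]
  note B3 = bounce_eq[OF a0 b0 u3 bb3[unfolded P1e P2e P3e]]
  define g where "g = (1 - (X1*X2+Y1*Y2)) / norm ((a*X2, b*Y2) - (a*X1, b*Y1))"
  have g12: "(1 - (X1*X2+Y1*Y2)) / norm ((a*X2, b*Y2) - (a*X1, b*Y1)) = g" unfolding g_def ..
  have g13: "(1 - (X1*X3+Y1*Y3)) / norm ((a*X3, b*Y3) - (a*X1, b*Y1)) = g"
    using neg_frac[OF B1] unfolding g_def .
  have g23: "(1 - (X2*X3+Y2*Y3)) / norm ((a*X3, b*Y3) - (a*X2, b*Y2)) = g"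
  proof -
    have "(1 - (X2*X1+Y2*Y1)) / norm ((a*X1, b*Y1) - (a*X2, b*Y2)) = (1 - (X2*X3+Y2*Y3)) / norm ((a*X3, b*Y3) - (a*X2, b*Y2))"
      using neg_frac[OF B2] .
    moreover have "(1 - (X2*X1+Y2*Y1)) / norm ((a*X1, b*Y1) - (a*X2, b*Y2)) = g"
    proof -
      have "norm ((a*X1, b*Y1) - (a*X2, b*Y2)) = norm ((a*X2, b*Y2) - (a*X1, b*Y1))" by (rule norm_minus_commute)
      moreover have "X2*X1+Y2*Y1 = X1*X2+Y1*Y2" by (simp add: mult.commute)
      ultimately show ?thesis unfolding g_def by (simp only:)
    qed
    ultimately show ?thesis by simp
  qed
  note E12 = pair_E[OF u1 u2 ne12 g12]
  note E13 = pair_E[OF u1 u3 ne13 g13]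
  note E23 = pair_E[OF u2 u3 ne23 g23]
  have gpos: "g > 0"
  proof -
    have "1 - (X1*X2+Y1*Y2) > 0" using dist_C[OF u1 u2 ne12] .
    moreover have "norm ((a*X2, b*Y2) - (a*X1, b*Y1)) > 0" using ne12 by (metis zero_less_norm_iff right_minus_eq)
    ultimately show ?thesis unfolding g_def by simp
  qed
  define c where "c = a^2 - b^2"
  define k where "k = g^2 * c"
  define r where "r = (a^2+b^2)/c"
  have cpos: "c > 0" unfolding c_def using assms(1,2) by (simp add: power_strict_mono)
  have kpos: "k > 0" unfolding k_def using gpos cpos by simp
  have rc: "r*c = a^2+b^2" unfolding r_def using cpos by simp
  have r1: "r > 1"
  proof -
    have "a^2+b^2 > c" unfolding c_def using b0 by simp
    then show ?thesis unfolding r_def using cpos by simp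
  qed
  have kr: "k*r = g^2*(a^2+b^2)" unfolding k_def using rc by (simp add: mult.assoc mult.commute)
  have e12: "X1*X2+Y1*Y2 - k*(X1*X2-Y1*Y2) = 1-k*r" unfolding kr unfolding k_def c_def using E12 by (simp add: mult.assoc)
  have e13: "X1*X3+Y1*Y3 - k*(X1*X3-Y1*Y3) = 1-k*r" unfolding kr unfolding k_def c_def using E13 by (simp add: mult.assoc)
  have e23: "X2*X3+Y2*Y3 - k*(X2*X3-Y2*Y3) = 1-k*r" unfolding kr unfolding k_def c_def using E23 by (simp add: mult.assoc)
  have e21: "X2*X1+Y2*Y1 - k*(X2*X1-Y2*Y1) = 1-k*r" using e12 by (simp add: mult.commute)
  have e31: "X3*X1+Y3*Y1 - k*(X3*X1-Y3*Y1) = 1-k*r" using e13 by (simp add: mult.commute)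
  have e32: "X3*X2+Y3*Y2 - k*(X3*X2-Y3*Y2) = 1-k*r" using e23 by (simp add: mult.commute)
  define Z1 where "Z1 = Complex X1 Y1"
  define Z2 where "Z2 = Complex X2 Y2"
  define Z3 where "Z3 = Complex X3 Y3"
  define kc where "kc = complex_of_real k"
  define rc' where "rc' = complex_of_real r"
  have F12: "Z1^2+Z2^2 - kc*Z1^2*Z2^2 - kc - 2*(1-kc*rc')*Z1*Z2 = 0"
    using Fij[OF u1 u2, of k r] e12 unfolding Z1_def Z2_def kc_def rc'_def by simp
  have F13: "Z1^2+Z3^2 - kc*Z1^2*Z3^2 - kc - 2*(1-kc*rc')*Z1*Z3 = 0"
    using Fij[OF u1 u3, of k r] e13 unfolding Z1_def Z3_def kc_def rc'_def by simp
  have F23: "Z2^2+Z3^2 - kc*Z2^2*Z3^2 - kc - 2*(1-kc*rc')*Z2*Z3 = 0"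
    using Fij[OF u2 u3, of k r] e23 unfolding Z2_def Z3_def kc_def rc'_def by simp
  have Zne: "Z2 \<noteq> Z3" using ne23 unfolding Z2_def Z3_def by auto
  have kcne: "kc \<noteq> 0" using kpos unfolding kc_def by simp
  have Dne: "1 - kc*Z1^2 \<noteq> 0"
  proof
    assume h: "1 - kc*Z1^2 = 0"
    have "k = 1 \<and> Y1 = 0" using D_ne[OF u1 kpos] h unfolding kc_def Z1_def by blast
    then show False using e12 r1 by simp
  qed
  have Z1ne: "Z1 \<noteq> 0" using u1 unfolding Z1_def by (auto simp: complex_eq_iff)
  have Z2ne: "Z2 \<noteq> 0" using u2 unfolding Z2_def by (auto simp: complex_eq_iff)
  have Z3ne: "Z3 \<noteq> 0" using u3 unfolding Z3_def by (auto simp: complex_eq_iff)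
  have D11: "X1*X1 - Y1*Y1 < r"
  proof -
    have "X1*X1 - Y1*Y1 \<le> 1" using u1 zero_le_square[of Y1] unfolding power2_eq_square by linarith
    then show ?thesis using r1 by simp
  qed
  have D22: "X2*X2 - Y2*Y2 < r"
  proof -
    have "X2*X2 - Y2*Y2 \<le> 1" using u2 zero_le_square[of Y2] unfolding power2_eq_square by linarith
    then show ?thesis using r1 by simp
  qed
  have D33: "X3*X3 - Y3*Y3 < r"
  proof -
    have "X3*X3 - Y3*Y3 \<le> 1" using u3 zero_le_square[of Y3] unfolding power2_eq_square by linarith
    then show ?thesis using r1 by simp
  qed
  have Qne: "Z1^4 - 2*rc'*Z1^2 + 1 \<noteq> 0"
  proof -
    have "Z1^4 - 2*rc'*Z1^2 + 1 = (Z1^2)^2 - 2*rc'*Z1^2 + 1" by algebra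
    also have "\<dots> = -2*Z1^2*complex_of_real(r - (X1*X1 - Y1*Y1))"
      unfolding Z1_def rc'_def by (rule q_id[OF u1])
    also have "\<dots> \<noteq> 0"
    proof -
      have "r - (X1*X1-Y1*Y1) \<noteq> 0" using D11 by simp
      then have h: "complex_of_real (r - (X1*X1 - Y1*Y1)) \<noteq> 0" by (metis of_real_eq_0_iff)
      have "Z1^2 \<noteq> 0" using Z1ne by simp
      then show ?thesis using h by (metis mult_eq_0_iff neg_equal_0_iff_equal zero_neq_numeral)
    qed
    finally show ?thesis .
  qed
  note CORE = core[OF F12 F13 F23 Zne kcne Dne Qne]
  have G: "2*k*r = 3 - k^2"
  proof -
    have "complex_of_real (2*k*r) = complex_of_real (3 - k^2)" using CORE unfolding kc_def rc'_def by simp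
    then show ?thesis using of_real_eq_iff by blast
  qed
  have PC: "4*(kc*rc'-1)^2*((Z1-Z2)*(Z1-Z3)*(Z2-Z3))^2
     = kc^3*(((Z1^2)^2-2*rc'*Z1^2+1)*((Z2^2)^2-2*rc'*Z2^2+1)*((Z3^2)^2-2*rc'*Z3^2+1))"
    using CORE by blast
  define C12 where "C12 = X1*X2+Y1*Y2"
  define C13 where "C13 = X1*X3+Y1*Y3"
  define C23 where "C23 = X2*X3+Y2*Y3"
  define d1 where "d1 = r - (X1*X1 - Y1*Y1)"
  define d2 where "d2 = r - (X2*X2 - Y2*Y2)"
  define d3 where "d3 = r - (X3*X3 - Y3*Y3)"
  have s12: "(Z1-Z2)^2 = 2*Z1*Z2*complex_of_real(C12-1)" unfolding Z1_def Z2_def C12_def by (rule sq_diff[OF u1 u2])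
  have s13: "(Z1-Z3)^2 = 2*Z1*Z3*complex_of_real(C13-1)" unfolding Z1_def Z3_def C13_def by (rule sq_diff[OF u1 u3])
  have s23: "(Z2-Z3)^2 = 2*Z2*Z3*complex_of_real(C23-1)" unfolding Z2_def Z3_def C23_def by (rule sq_diff[OF u2 u3])
  have q1: "(Z1^2)^2-2*rc'*Z1^2+1 = -2*Z1^2*complex_of_real d1" unfolding Z1_def rc'_def d1_def by (rule q_id[OF u1])
  have q2: "(Z2^2)^2-2*rc'*Z2^2+1 = -2*Z2^2*complex_of_real d2" unfolding Z2_def rc'_def d2_def by (rule q_id[OF u2])
  have q3: "(Z3^2)^2-2*rc'*Z3^2+1 = -2*Z3^2*complex_of_real d3" unfolding Z3_def rc'_def d3_def by (rule q_id[OF u3])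
  have "8*(Z1*Z2*Z3)^2 * (4*(kc*rc'-1)^2*complex_of_real(C12-1)*complex_of_real(C13-1)*complex_of_real(C23-1))
      = 4*(kc*rc'-1)^2*((Z1-Z2)^2*(Z1-Z3)^2*(Z2-Z3)^2)"
    unfolding s12 s13 s23 by algebra
  also have "\<dots> = 4*(kc*rc'-1)^2*((Z1-Z2)*(Z1-Z3)*(Z2-Z3))^2" by (simp add: power_mult_distrib)
  also have "\<dots> = kc^3*(((Z1^2)^2-2*rc'*Z1^2+1)*((Z2^2)^2-2*rc'*Z2^2+1)*((Z3^2)^2-2*rc'*Z3^2+1))" by (rule PC)
  also have "\<dots> = 8*(Z1*Z2*Z3)^2 * (-(kc^3*complex_of_real d1*complex_of_real d2*complex_of_real d3))"
    unfolding q1 q2 q3 by algebra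
  finally have hh: "8*(Z1*Z2*Z3)^2 * (4*(kc*rc'-1)^2*complex_of_real(C12-1)*complex_of_real(C13-1)*complex_of_real(C23-1))
      = 8*(Z1*Z2*Z3)^2 * (-(kc^3*complex_of_real d1*complex_of_real d2*complex_of_real d3))" .
  have nz8: "8*(Z1*Z2*Z3)^2 \<noteq> 0" using Z1ne Z2ne Z3ne by simp
  have "4*(kc*rc'-1)^2*complex_of_real(C12-1)*complex_of_real(C13-1)*complex_of_real(C23-1)
      = -(kc^3*complex_of_real d1*complex_of_real d2*complex_of_real d3)"
    using mult_left_cancel[OF nz8] hh by blast
  then have "complex_of_real (4*(k*r-1)^2*(C12-1)*(C13-1)*(C23-1)) = complex_of_real (-(k^3*d1*d2*d3))"
    unfolding kc_def rc'_def by simp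
  then have R1: "4*(k*r-1)^2*(C12-1)*(C13-1)*(C23-1) = -(k^3*d1*d2*d3)" using of_real_eq_iff by blast
  have a23: "1 + (X2*X3+Y2*Y3) \<noteq> 0" using anti[OF u1 u2 u3 e12 e13 e23 kpos r1] .
  have a31: "1 + (X3*X1+Y3*Y1) \<noteq> 0" using anti[OF u2 u3 u1 e23 e21 e31 kpos r1] .
  have a12: "1 + (X1*X2+Y1*Y2) \<noteq> 0" using anti[OF u3 u1 u2 e31 e32 e12 kpos r1] .
  have ne31: "(a*X3, b*Y3) \<noteq> (a*X1, b*Y1)" using ne13 by metis
  have i23: "1 - (X2*X3+Y2*Y3) \<noteq> 0" using dist_C[OF u2 u3 ne23] by simp
  have i31: "1 - (X3*X1+Y3*Y1) \<noteq> 0" using dist_C[OF u3 u1 ne31] by simp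
  have i12: "1 - (X1*X2+Y1*Y2) \<noteq> 0" using dist_C[OF u1 u2 ne12] by simp
  define t1 where "t1 = b^2*X1^2 + a^2*Y1^2"
  define t2 where "t2 = b^2*X2^2 + a^2*Y2^2"
  define t3 where "t3 = b^2*X3^2 + a^2*Y3^2"
  define N12 where "N12 = b^2*X1*X2 + a^2*Y1*Y2"
  define N23 where "N23 = b^2*X2*X3 + a^2*Y2*Y3"
  define N31 where "N31 = b^2*X3*X1 + a^2*Y3*Y1"
  have cos23: "cos (outer_angle a b P2 P3) = - N23 / (sqrt t2 * sqrt t3)"
    unfolding P2e P3e N23_def t2_def t3_def by (rule outer_cos[OF a0 b0 u2 u3 i23 a23])
  have cos31: "cos (outer_angle a b P3 P1) = - N31 / (sqrt t3 * sqrt t1)"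
    unfolding P1e P3e N31_def t1_def t3_def by (rule outer_cos[OF a0 b0 u3 u1 i31 a31])
  have cos12: "cos (outer_angle a b P1 P2) = - N12 / (sqrt t1 * sqrt t2)"
    unfolding P1e P2e N12_def t1_def t2_def by (rule outer_cos[OF a0 b0 u1 u2 i12 a12])
  have ab2: "b^2 \<le> a^2" using assms(1,2) by (simp add: power_mono)
  have tpos: "t > 0" if "t = b^2*X^2 + a^2*Y^2" "X^2+Y^2 = 1" for t X Y
  proof -
    have "a^2*Y^2 \<ge> b^2*Y^2" using ab2 by (simp add: mult_right_mono)
    then have "t \<ge> b^2*(X^2+Y^2)" using that(1) by (simp add: algebra_simps)
    then have "t \<ge> b^2" using that(2) by simp
    moreover have "b^2 > 0" using b0 by simp
    ultimately show ?thesis by linarith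
  qed
  have t1p: "t1 > 0" using tpos[OF t1_def u1] .
  have t2p: "t2 > 0" using tpos[OF t2_def u2] .
  have t3p: "t3 > 0" using tpos[OF t3_def u3] .
  have cd: "c = a^2 - b^2" unfolding c_def ..
  have nn12: "2*k*N12 = c*(k*r-1)*(C12-1)" unfolding N12_def C12_def using e12 rc cd by algebra
  have nn23: "2*k*N23 = c*(k*r-1)*(C23-1)" unfolding N23_def C23_def using e23 rc cd by algebra
  have nn31: "2*k*N31 = c*(k*r-1)*(C13-1)" unfolding N31_def C13_def using e13 rc cd by algebra
  have tt1: "c*d1 = 2*t1" unfolding t1_def d1_def using u1 rc cd by algebra
  have tt2: "c*d2 = 2*t2" unfolding t2_def d2_def using u2 rc cd by algebra
  have tt3: "c*d3 = 2*t3" unfolding t3_def d3_def using u3 rc cd by algebra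
  have "8*k^3*(-(4*N12*N23*N31)) = -4*((2*k*N12)*(2*k*N23)*(2*k*N31))" by algebra
  also have "\<dots> = -4*((c*(k*r-1)*(C12-1))*(c*(k*r-1)*(C23-1))*(c*(k*r-1)*(C13-1)))" by (simp only: nn12 nn23 nn31)
  also have "\<dots> = -(k*r-1)*c^3*(4*(k*r-1)^2*(C12-1)*(C13-1)*(C23-1))" by algebra
  also have "\<dots> = (k*r-1)*c^3*(k^3*d1*d2*d3)" unfolding R1 by algebra
  also have "\<dots> = (k*r-1)*k^3*((c*d1)*(c*d2)*(c*d3))" by algebra
  also have "\<dots> = (k*r-1)*k^3*((2*t1)*(2*t2)*(2*t3))" by (simp only: tt1 tt2 tt3)
  also have "\<dots> = 8*k^3*((k*r-1)*(t1*t2*t3))" by algebra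
  finally have hk: "8*k^3*(-(4*N12*N23*N31)) = 8*k^3*((k*r-1)*(t1*t2*t3))" .
  have k8: "8*k^3 \<noteq> 0" using kpos by simp
  have key: "-(4*N12*N23*N31) = (k*r-1)*(t1*t2*t3)" using mult_left_cancel[OF k8] hk by blast
  have s1: "sqrt t1 * sqrt t1 = t1" using t1p by simp
  have s2: "sqrt t2 * sqrt t2 = t2" using t2p by simp
  have s3: "sqrt t3 * sqrt t3 = t3" using t3p by simp
  have sn1: "sqrt t1 \<noteq> 0" using t1p by simp
  have sn2: "sqrt t2 \<noteq> 0" using t2p by simp
  have sn3: "sqrt t3 \<noteq> 0" using t3p by simp
  have "cos (outer_angle a b P2 P3) * cos (outer_angle a b P3 P1) * cos (outer_angle a b P1 P2)
      = - (N12*N23*N31) / ((sqrt t1 * sqrt t1)*(sqrt t2 * sqrt t2)*(sqrt t3 * sqrt t3))"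
    unfolding cos23 cos31 cos12 using sn1 sn2 sn3 by (simp add: field_simps)
  also have "\<dots> = - (N12*N23*N31) / (t1*t2*t3)" unfolding s1 s2 s3 ..
  also have "\<dots> = (k*r-1)/4"
  proof -
    have "t1*t2*t3 \<noteq> 0" using t1p t2p t3p by simp
    then show ?thesis using key by (simp add: field_simps)
  qed
  also have "\<dots> = joachimsthal3 a b * perimeter3 a b / 4 - 1"
    using JL[OF assms(1,2) kpos G] rc unfolding c_def by simp
  finally show ?thesis .
qed
end
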